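(* Let $v\ge2$. Then an optimum $(d,3)$-CDA$((d+1)v^3;4,v)$ exists for every positive integer $d$ with $d+1\le v$.
   Context: Consecutive $t$-way interaction in an $N\times k$ array $A=(a_{ij})$ over a $v$-set $V$: $T=\{(i,x_i),\dots,(i+t-1,x_{i+t-1})\}$, $1\le i\le k-t+1$, $x_r\in V$; $\rho(A,T)=\{r: a_{r,j}=x_j\ \forall (j,x_j)\in T\}$, $\rho(A,\mathcal T)=\bigcup_{T\in\mathcal T}\rho(A,T)$. A $(d,t)$-CDA$(N;k,v)$ is an $N\times k$ array over $V$ in which every $t$ consecutive columns contain every $t$-tuple at least once, and such that for every set $\mathcal T$ of exactly $d$ distinct consecutive $t$-way interactions and every consecutive $t$-way interaction $T$: $\rho(A,T)\subseteq\rho(A,\mathcal T)$ iff $T\in\mathcal T$. It is optimum if $N=(d+1)v^t$. *)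

theory Defs
  imports Main
begin

text \<open>An N x k array over the v-set V = {0..<v}: rows 0..<N, columns 0..<k
  (column c here is column c+1 of the paper). Entry in row r, column c is A r c.\<close>

definition is_array :: "nat \<Rightarrow> nat \<Rightarrow> nat \<Rightarrow> (nat \<Rightarrow> nat \<Rightarrow> nat) \<Rightarrow> bool" where
  "is_array N k v A \<longleftrightarrow> (\<forall>r<N. \<forall>c<k. A r c < v)"

definition consec_interactions :: "nat \<Rightarrow> nat \<Rightarrow> nat \<Rightarrow> (nat \<times> nat) set set" where
  "consec_interactions k t v =
     {T. \<exists>i x. i + t \<le> k \<and> (\<forall>j<t. x j < v) \<and> T = {(i + j, x j) | j. j < t}}"

definition rho :: "nat \<Rightarrow> (nat \<Rightarrow> nat \<Rightarrow> nat) \<Rightarrow> (nat \<times> nat) set \<Rightarrow> nat set" where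
  "rho N A T = {r. r < N \<and> (\<forall>(j, y)\<in>T. A r j = y)}"

definition rho_set :: "nat \<Rightarrow> (nat \<Rightarrow> nat \<Rightarrow> nat) \<Rightarrow> (nat \<times> nat) set set \<Rightarrow> nat set" where
  "rho_set N A \<T> = (\<Union>T\<in>\<T>. rho N A T)"

definition consec_covering :: "nat \<Rightarrow> nat \<Rightarrow> nat \<Rightarrow> nat \<Rightarrow> (nat \<Rightarrow> nat \<Rightarrow> nat) \<Rightarrow> bool" where
  "consec_covering t N k v A \<longleftrightarrow>
     (\<forall>i x. i + t \<le> k \<longrightarrow> (\<forall>j<t. x j < v) \<longrightarrow> (\<exists>r<N. \<forall>j<t. A r (i + j) = x j))"

definition is_CDA :: "nat \<Rightarrow> nat \<Rightarrow> nat \<Rightarrow> nat \<Rightarrow> nat \<Rightarrow> (nat \<Rightarrow> nat \<Rightarrow> nat) \<Rightarrow> bool" where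
  "is_CDA d t N k v A \<longleftrightarrow>
     is_array N k v A \<and> consec_covering t N k v A \<and>
     (\<forall>\<T> T. \<T> \<subseteq> consec_interactions k t v \<longrightarrow> card \<T> = d \<longrightarrow>
        T \<in> consec_interactions k t v \<longrightarrow>
        (rho N A T \<subseteq> rho_set N A \<T> \<longleftrightarrow> T \<in> \<T>))"

end

theory Submission
  imports Defs
begin

definition enc :: "nat \<Rightarrow> nat \<Rightarrow> nat \<Rightarrow> nat \<Rightarrow> nat \<Rightarrow> nat" where
  "enc v s a b c = c + v * (b + v * (a + v * s))"

definition Arr :: "nat \<Rightarrow> nat \<Rightarrow> nat \<Rightarrow> nat" where
  "Arr v r col = (if col = 0 then r div v div v mod v else if col = 1 then r div v mod v
     else if col = 2 then r mod v else (r div v div v mod v + r div v div v div v) mod v)"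

lemma bnd_step: "(c::nat) < v \<Longrightarrow> y < w \<Longrightarrow> c + v * y < v * w"
proof -
  assume "c < v" "y < w"
  then have "c + v*y < v + v*y" by simp
  also have "\<dots> = v * (y+1)" by simp
  also have "\<dots> \<le> v * w" using \<open>y < w\<close> by (intro mult_le_mono2) simp
  finally show ?thesis .
qed

lemma enc_lt: "a < v \<Longrightarrow> b < v \<Longrightarrow> c < v \<Longrightarrow> s \<le> d \<Longrightarrow> enc v s a b c < (d+1) * v^3"
proof -
  assume h: "a < v" "b < v" "c < v" "s \<le> d"
  have "a + v * s < v * (d+1)" using h by (intro bnd_step) auto
  then have "b + v * (a + v * s) < v * (v * (d+1))" using h by (intro bnd_step) auto
  then have "c + v * (b + v * (a + v * s)) < v * (v * (v * (d+1)))" using h by (intro bnd_step) auto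
  then show ?thesis unfolding enc_def by (simp add: power3_eq_cube mult.commute mult.left_commute)
qed

lemma enc_dec:
  assumes "a < v" "b < v" "c < v"
  shows "enc v s a b c mod v = c" "enc v s a b c div v mod v = b"
    "enc v s a b c div v div v mod v = a" "enc v s a b c div v div v div v = s"
proof -
  have v: "v > 0" using assms by auto
  have 1: "enc v s a b c div v = b + v * (a + v * s)" unfolding enc_def using assms v by simp
  have 2: "(b + v * (a + v * s)) div v = a + v*s" using assms v by simp
  have 3: "(a + v*s) div v = s" using assms v by simp
  show "enc v s a b c mod v = c" unfolding enc_def using assms by simp
  show "enc v s a b c div v mod v = b" using 1 assms by simp
  show "enc v s a b c div v div v mod v = a" using 1 2 assms by simp
  show "enc v s a b c div v div v div v = s" using 1 2 3 by simp
qed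

lemma dec_enc:
  assumes "v > 0"
  shows "r = enc v (r div v div v div v) (r div v div v mod v) (r div v mod v) (r mod v)"
proof -
  have "r = r mod v + v * (r div v)" by simp
  moreover have "r div v = r div v mod v + v * (r div v div v)" by simp
  moreover have "r div v div v = r div v div v mod v + v * (r div v div v div v)" by simp
  ultimately show ?thesis unfolding enc_def by simp
qed

lemma s_bound:
  fixes r d v :: nat
  assumes "r < (d+1) * v^3" "v > 0"
  shows "r div v div v div v \<le> d"
proof -
  have e1: "r div (v*v*v) = r div (v*v) div v" by (simp only: div_mult2_eq)
  have e2: "r div (v*v) = r div v div v" by (simp only: div_mult2_eq)
  have "r div v div v div v = r div (v*v*v)" using e1 e2 by simp
  also have "\<dots> < d + 1" using assms by (metis less_mult_imp_div_less power3_eq_cube)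
  finally show ?thesis by simp
qed

lemma modadd_inj:
  assumes "(a + s) mod v = (a + s') mod (v::nat)" "s < v" "s' < v"
  shows "s = s'"
proof (rule ccontr)
  assume ne: "s \<noteq> s'"
  have "int ((a+s) mod v) = int ((a+s') mod v)" using assms(1) by simp
  then have "(int a + int s) mod int v = (int a + int s') mod int v" by (simp add: of_nat_mod)
  then have "int v dvd (int a + int s) - (int a + int s')" by (simp add: mod_eq_dvd_iff)
  then have "int v dvd int s - int s'" by simp
  moreover have "int s - int s' \<noteq> 0" using ne by simp
  ultimately have "\<bar>int v\<bar> \<le> \<bar>int s - int s'\<bar>" using dvd_imp_le_int by blast
  then show False using assms(2,3) by simp
qed

lemma setcong: "\<forall>j<t. x j = y j \<Longrightarrow> {(i+j, x j) | j. j < (t::nat)} = {(i+j, y j) | j. j < t}"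
  by force

lemma three_cases: "(j::nat) < 3 \<longleftrightarrow> j = 0 \<or> j = 1 \<or> j = 2" by auto

lemma rows_inj:
  assumes "v > 0" "d < v" "r < (d+1)*v^3" "r' < (d+1)*v^3" "\<forall>col<4. Arr v r col = Arr v r' col"
  shows "r = r'"
proof -
  have c0: "r div v div v mod v = r' div v div v mod v" using assms(5)[rule_format, of 0] by (simp add: Arr_def)
  have c1: "r div v mod v = r' div v mod v" using assms(5)[rule_format, of 1] by (simp add: Arr_def)
  have c2: "r mod v = r' mod v" using assms(5)[rule_format, of 2] by (simp add: Arr_def)
  have c3: "(r div v div v mod v + r div v div v div v) mod v = (r div v div v mod v + r' div v div v div v) mod v"
    using assms(5)[rule_format, of 3] c0 by (simp add: Arr_def)
  have "r div v div v div v \<le> d" "r' div v div v div v \<le> d"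
    using s_bound[OF assms(3,1)] s_bound[OF assms(4,1)] by auto
  then have c4: "r div v div v div v = r' div v div v div v" using modadd_inj[OF c3] assms(2) by simp
  show ?thesis using dec_enc[OF assms(1), of r] dec_enc[OF assms(1), of r'] c0 c1 c2 c4 by metis
qed

lemma rows_exist:
  assumes "v > 0" "d < v" "i + 3 \<le> 4" "\<forall>j<3. x j < v"
  shows "\<exists>g. inj_on g {..d} \<and> (\<forall>s\<le>d. g s < (d+1)*v^3 \<and> (\<forall>j<3. Arr v (g s) (i+j) = x j))"
proof (cases "i = 0")
  case True
  let ?g = "\<lambda>s. enc v s (x 0) (x 1) (x 2)"
  have x: "x 0 < v" "x 1 < v" "x 2 < v" using assms(4) by auto
  have "inj_on ?g {..d}"
    by (rule inj_onI) (metis enc_dec(4)[OF x])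
  moreover have "\<forall>s\<le>d. ?g s < (d+1)*v^3 \<and> (\<forall>j<3. Arr v (?g s) (i+j) = x j)"
    using True enc_lt[OF x] enc_dec[OF x] by (auto simp: Arr_def three_cases)
  ultimately show ?thesis by blast
next
  case False
  then have i: "i = 1" using assms(3) by simp
  let ?a = "\<lambda>s. (x 2 + (v - s)) mod v"
  let ?g = "\<lambda>s. enc v s (?a s) (x 0) (x 1)"
  have x: "x 0 < v" "x 1 < v" "x 2 < v" using assms(4) by auto
  have a: "?a s < v" for s using assms(1) by simp
  have a2: "(?a s + s) mod v = x 2" if "s \<le> d" for s
  proof -
    have "(?a s + s) mod v = (x 2 + (v - s) + s) mod v" by (simp add: mod_add_left_eq)
    also have "x 2 + (v - s) + s = x 2 + v" using that assms(2) by simp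
    finally show ?thesis using x by simp
  qed
  have "inj_on ?g {..d}"
    by (rule inj_onI) (metis enc_dec(4)[OF a x(1,2)])
  moreover have "\<forall>s\<le>d. ?g s < (d+1)*v^3 \<and> (\<forall>j<3. Arr v (?g s) (i+j) = x j)"
  proof (intro allI impI conjI)
    fix s assume s: "s \<le> d"
    show "?g s < (d+1)*v^3" using enc_lt[OF a x(1,2) s] .
    fix j :: nat assume "j < 3"
    then show "Arr v (?g s) (i+j) = x j"
      using i enc_dec[OF a x(1,2), of s s] a2[OF s] x by (auto simp: Arr_def three_cases)
  qed
  ultimately show ?thesis by blast
qed

lemma rho_eq: "rho N A {(i + j, x j) | j. j < t} = {r. r < N \<and> (\<forall>j<t. A r (i+j) = x j)}"
  unfolding rho_def by auto

lemma key:
  assumes "v > 0" "d < v" "T \<in> consec_interactions 4 3 v" "T' \<in> consec_interactions 4 3 v"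
    "r \<in> rho ((d+1)*v^3) (Arr v) T" "r \<in> rho ((d+1)*v^3) (Arr v) T'"
    "r' \<in> rho ((d+1)*v^3) (Arr v) T" "r' \<in> rho ((d+1)*v^3) (Arr v) T'" "r \<noteq> r'"
  shows "T = T'"
proof -
  obtain i x where T: "i + 3 \<le> 4" "T = {(i + j, x j) | j. j < 3}"
    using assms(3) unfolding consec_interactions_def by auto
  obtain i' x' where T': "i' + 3 \<le> 4" "T' = {(i' + j, x' j) | j. j < 3}"
    using assms(4) unfolding consec_interactions_def by auto
  have r: "r < (d+1)*v^3" "\<forall>j<3. Arr v r (i+j) = x j" "\<forall>j<3. Arr v r (i'+j) = x' j"
    using assms(5,6) T T' rho_eq by auto
  have r': "r' < (d+1)*v^3" "\<forall>j<3. Arr v r' (i+j) = x j" "\<forall>j<3. Arr v r' (i'+j) = x' j"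
    using assms(7,8) T T' rho_eq by auto
  show ?thesis
  proof (cases "i = i'")
    case True
    then have "\<forall>j<3. x j = x' j" using r by auto
    then show ?thesis using T(2) T'(2) True by (auto intro!: setcong)
  next
    case False
    have ii: "(i = 0 \<and> i' = 1) \<or> (i = 1 \<and> i' = 0)" using T(1) T'(1) False by auto
    have "\<forall>col<4. Arr v r col = Arr v r' col"
    proof (intro allI impI)
      fix col :: nat assume c: "col < 4"
      show "Arr v r col = Arr v r' col"
      proof (cases "i \<le> col \<and> col < i + 3")
        case True
        then have "col = i + (col - i)" "col - i < 3" by auto
        then show ?thesis using r(2) r'(2) by metis
      next
        case False
        then have "i' \<le> col \<and> col < i' + 3" using ii c by auto
        then have "col = i' + (col - i')" "col - i' < 3" by auto
        then show ?thesis using r(3) r'(3) by metis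
      qed
    qed
    then have "r = r'" using rows_inj assms(1,2) r(1) r'(1) by blast
    then show ?thesis using assms(9) by simp
  qed
qed

theorem mainTheorem15:
  fixes v d :: nat
  assumes "v \<ge> 2" and "d \<ge> 1" and "d + 1 \<le> v"
  shows "\<exists>A. is_CDA d 3 ((d + 1) * v ^ 3) 4 v A"
proof
  have v: "v > 0" and dv: "d < v" using assms by auto
  let ?N = "(d + 1) * v ^ 3"
  show "is_CDA d 3 ?N 4 v (Arr v)"
    unfolding is_CDA_def
  proof (intro conjI allI impI)
    show "is_array ?N 4 v (Arr v)" unfolding is_array_def Arr_def using v by auto
    show "consec_covering 3 ?N 4 v (Arr v)" unfolding consec_covering_def
    proof (intro allI impI)
      fix i and x :: "nat \<Rightarrow> nat" assume "i + 3 \<le> (4::nat)" "\<forall>j<3. x j < v"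
      then obtain g where "\<forall>s\<le>d. g s < ?N \<and> (\<forall>j<3. Arr v (g s) (i+j) = x j)"
        using rows_exist[OF v dv] by blast
      then show "\<exists>r<?N. \<forall>j<3. Arr v r (i + j) = x j" by blast
    qed
    fix \<T> T
    assume TT: "\<T> \<subseteq> consec_interactions 4 3 v" and cd: "card \<T> = d"
      and T: "T \<in> consec_interactions 4 3 v"
    show "rho ?N (Arr v) T \<subseteq> rho_set ?N (Arr v) \<T> \<longleftrightarrow> T \<in> \<T>"
    proof
      assume "T \<in> \<T>" then show "rho ?N (Arr v) T \<subseteq> rho_set ?N (Arr v) \<T>"
        unfolding rho_set_def by blast
    next
      assume sub: "rho ?N (Arr v) T \<subseteq> rho_set ?N (Arr v) \<T>"
      show "T \<in> \<T>"
      proof (rule ccontr)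
        assume nT: "T \<notin> \<T>"
        obtain i x where ix: "i + 3 \<le> 4" "\<forall>j<3. x j < v" "T = {(i + j, x j) | j. j < 3}"
          using T unfolding consec_interactions_def by auto
        obtain g where g: "inj_on g {..d}" "\<forall>s\<le>d. g s < ?N \<and> (\<forall>j<3. Arr v (g s) (i+j) = x j)"
          using rows_exist[OF v dv ix(1,2)] by blast
        have gT: "g s \<in> rho ?N (Arr v) T" if "s \<le> d" for s
          using g(2) that ix(3) rho_eq by auto
        have ex: "\<exists>T'. T' \<in> \<T> \<and> g s \<in> rho ?N (Arr v) T'" if "s \<le> d" for s
          using sub gT[OF that] unfolding rho_set_def by blast
        define h where "h s = (SOME T'. T' \<in> \<T> \<and> g s \<in> rho ?N (Arr v) T')" for s
        have h: "h s \<in> \<T> \<and> g s \<in> rho ?N (Arr v) (h s)" if "s \<le> d" for s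
          unfolding h_def using someI_ex[OF ex[OF that]] .
        have "inj_on h {..d}"
        proof (rule inj_onI)
          fix s s' assume s: "s \<in> {..d}" "s' \<in> {..d}" "h s = h s'"
          show "s = s'"
          proof (rule ccontr)
            assume "s \<noteq> s'"
            then have "g s \<noteq> g s'" using g(1) s(1,2) by (meson inj_on_eq_iff)
            moreover have "h s \<in> consec_interactions 4 3 v" using h s TT by auto
            ultimately have "T = h s"
              using key[OF v dv T, of "h s" "g s" "g s'"] h[of s] h[of s'] gT[of s] gT[of s'] s by auto
            then show False using nT h s by auto
          qed
        qed
        moreover have "h ` {..d} \<subseteq> \<T>" using h by auto
        moreover have "finite \<T>" using cd assms(2) card.infinite by fastforce
        ultimately have "card {..d} \<le> card \<T>" by (meson card_inj_on_le)
        then show False using cd by simp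
      qed
    qed
  qed
qed

end
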